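(* Let $M,N$ be sharp, integral monoids, $\Gamma$ an $M$-metrised graph, $f:M\to N$ an injective monoid homomorphism with edge contraction $\Gamma'$ of $\Gamma$ along $f$, and $D\in\operatorname{Div}(\Gamma)$. Then $r(f_*(D))=r(D)$.
   Context: Monoids are commutative, sharp (only unit $0$), integral (cancellative), with groupification; $\langle m\rangle=\{km:k\in\mathbb Z\}$ and for $x=km$, $m\ne0$, $x/m:=k$. A graph is $(X,r,i)$, $X$ finite, $r$ idempotent, $i$ an involution, $i(x)=x\iff r(x)=x$; vertices $V$ = fixed points, half-edges $H=X\setminus V$, edges $\{e,i(e)\}$ joining $r(e),r(i(e))$, $H_v=\{e\in H:r(e)=v\}$; graphs are connected. An $M$-metrised graph adds $l:X\to M$ with $l(i(x))=l(x)$, $l(x)=0\iff x\in V$. Divisors: free abelian group on $V$, pointwise order; $\operatorname{Div}^k_+$ = effective divisors of degree $k$. $\operatorname{PL}(\Gamma)=\{g:V\to M^{gp}: g(r(e))-g(r(i(e)))\in\langle l(e)\rangle\ \forall e\in H\}$; $\Delta(g)=\sum_{v}\big(\sum_{e\in H_v}\frac{g(v)-g(r(i(e)))}{l(e)}\big)[v]$; $D\sim D'$ iff $D-D'\in\Delta(\operatorname{PL}(\Gamma))$; $|D|=\{E\ge0:E\sim D\}$; $r(D)=\max\{k\in\mathbb Z:|D-F|\ne\emptyset\ \forall F\in\operatorname{Div}^k_+(\Gamma)\}$. The edge contraction of $\Gamma$ along $f$ is the $N$-metrised graph $\Gamma'$ obtained as the quotient of $X$ by the equivalence relation generated by $e\sim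 r(e)\sim i(e)\sim r(i(e))$ for every $e\in H$ with $f(l(e))=0$, with induced $r,i$ and length $f\circ l$; $\varphi$ is the quotient map and $f_*(D)=\sum_{v}D(v)[\varphi(v)]$. *)

theory Defs
  imports Main
begin

text \<open>An integral commutative monoid embeds in its groupification; we represent it
as a subset M of an ambient abelian group containing 0 and closed under +.
Integrality is then automatic; sharpness means 0 is the only unit.\<close>

definition sharp_integral_monoid :: "'g::ab_group_add set \<Rightarrow> bool" where
  "sharp_integral_monoid M \<longleftrightarrow> 0 \<in> M \<and> (\<forall>a\<in>M. \<forall>b\<in>M. a + b \<in> M)
     \<and> (\<forall>a\<in>M. \<forall>b\<in>M. a + b = 0 \<longrightarrow> a = 0)"

definition gp :: "'g::ab_group_add set \<Rightarrow> 'g set" where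
  "gp M = {a - b | a b. a \<in> M \<and> b \<in> M}"

definition monoid_hom :: "'g::ab_group_add set \<Rightarrow> 'h::ab_group_add set \<Rightarrow> ('g \<Rightarrow> 'h) \<Rightarrow> bool" where
  "monoid_hom M N f \<longleftrightarrow> f ` M \<subseteq> N \<and> f 0 = 0 \<and> (\<forall>a\<in>M. \<forall>b\<in>M. f (a + b) = f a + f b)"

definition zmult :: "int \<Rightarrow> 'g::ab_group_add \<Rightarrow> 'g" where
  "zmult k m = (if 0 \<le> k then (\<Sum>_\<in>{..<nat k}. m) else - (\<Sum>_\<in>{..<nat (-k)}. m))"

definition cyc :: "'g::ab_group_add \<Rightarrow> 'g set" where
  "cyc m = {zmult k m | k. True}"

definition zdiv :: "'g::ab_group_add \<Rightarrow> 'g \<Rightarrow> int" where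
  "zdiv x m = (THE k. x = zmult k m)"

definition verts :: "'a set \<Rightarrow> ('a \<Rightarrow> 'a) \<Rightarrow> 'a set" where
  "verts X r = {x \<in> X. r x = x}"

definition hedges :: "'a set \<Rightarrow> ('a \<Rightarrow> 'a) \<Rightarrow> 'a set" where
  "hedges X r = X - verts X r"

definition is_graph :: "'a set \<Rightarrow> ('a \<Rightarrow> 'a) \<Rightarrow> ('a \<Rightarrow> 'a) \<Rightarrow> bool" where
  "is_graph X r i \<longleftrightarrow> finite X \<and> r ` X \<subseteq> X \<and> i ` X \<subseteq> X
     \<and> (\<forall>x\<in>X. r (r x) = r x) \<and> (\<forall>x\<in>X. i (i x) = x)
     \<and> (\<forall>x\<in>X. i x = x \<longleftrightarrow> r x = x)
     \<and> (\<forall>v\<in>verts X r. \<forall>w\<in>verts X r.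
          (v, w) \<in> {(r e, r (i e)) | e. e \<in> hedges X r}\<^sup>*)"

definition metrised :: "'g::ab_group_add set \<Rightarrow> 'a set \<Rightarrow> ('a \<Rightarrow> 'a) \<Rightarrow> ('a \<Rightarrow> 'a) \<Rightarrow> ('a \<Rightarrow> 'g) \<Rightarrow> bool" where
  "metrised M X r i l \<longleftrightarrow> is_graph X r i \<and> (\<forall>x\<in>X. l x \<in> M)
     \<and> (\<forall>x\<in>X. l (i x) = l x) \<and> (\<forall>x\<in>X. l x = 0 \<longleftrightarrow> x \<in> verts X r)"

definition divisors :: "'a set \<Rightarrow> ('a \<Rightarrow> 'a) \<Rightarrow> ('a \<Rightarrow> int) set" where
  "divisors X r = {D. \<forall>x. x \<notin> verts X r \<longrightarrow> D x = 0}"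

definition deg :: "'a set \<Rightarrow> ('a \<Rightarrow> 'a) \<Rightarrow> ('a \<Rightarrow> int) \<Rightarrow> int" where
  "deg X r D = (\<Sum>v\<in>verts X r. D v)"

definition eff_divs :: "'a set \<Rightarrow> ('a \<Rightarrow> 'a) \<Rightarrow> int \<Rightarrow> ('a \<Rightarrow> int) set" where
  "eff_divs X r k = {F \<in> divisors X r. (\<forall>v. 0 \<le> F v) \<and> deg X r F = k}"

definition PL :: "'g::ab_group_add set \<Rightarrow> 'a set \<Rightarrow> ('a \<Rightarrow> 'a) \<Rightarrow> ('a \<Rightarrow> 'a) \<Rightarrow> ('a \<Rightarrow> 'g) \<Rightarrow> ('a \<Rightarrow> 'g) set" where
  "PL M X r i l = {g. (\<forall>v\<in>verts X r. g v \<in> gp M) \<and> (\<forall>x. x \<notin> verts X r \<longrightarrow> g x = 0)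
      \<and> (\<forall>e\<in>hedges X r. g (r e) - g (r (i e)) \<in> cyc (l e))}"

definition laplacian :: "'a set \<Rightarrow> ('a \<Rightarrow> 'a) \<Rightarrow> ('a \<Rightarrow> 'a) \<Rightarrow> ('a \<Rightarrow> 'g::ab_group_add) \<Rightarrow> ('a \<Rightarrow> 'g) \<Rightarrow> 'a \<Rightarrow> int" where
  "laplacian X r i l g = (\<lambda>v. if v \<in> verts X r
      then (\<Sum>e\<in>{e \<in> hedges X r. r e = v}. zdiv (g v - g (r (i e))) (l e)) else 0)"

definition lin_equiv :: "'g::ab_group_add set \<Rightarrow> 'a set \<Rightarrow> ('a \<Rightarrow> 'a) \<Rightarrow> ('a \<Rightarrow> 'a) \<Rightarrow> ('a \<Rightarrow> 'g) \<Rightarrow> ('a \<Rightarrow> int) \<Rightarrow> ('a \<Rightarrow> int) \<Rightarrow> bool" where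
  "lin_equiv M X r i l D D' \<longleftrightarrow> D - D' \<in> laplacian X r i l ` PL M X r i l"

definition lin_sys :: "'g::ab_group_add set \<Rightarrow> 'a set \<Rightarrow> ('a \<Rightarrow> 'a) \<Rightarrow> ('a \<Rightarrow> 'a) \<Rightarrow> ('a \<Rightarrow> 'g) \<Rightarrow> ('a \<Rightarrow> int) \<Rightarrow> ('a \<Rightarrow> int) set" where
  "lin_sys M X r i l D = {E \<in> divisors X r. (\<forall>v. 0 \<le> E v) \<and> lin_equiv M X r i l E D}"

definition rank :: "'g::ab_group_add set \<Rightarrow> 'a set \<Rightarrow> ('a \<Rightarrow> 'a) \<Rightarrow> ('a \<Rightarrow> 'a) \<Rightarrow> ('a \<Rightarrow> 'g) \<Rightarrow> ('a \<Rightarrow> int) \<Rightarrow> int" where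
  "rank M X r i l D = (GREATEST k::int. \<forall>F\<in>eff_divs X r k. lin_sys M X r i l (D - F) \<noteq> {})"

definition contr_rel :: "('g \<Rightarrow> 'h::zero) \<Rightarrow> 'a set \<Rightarrow> ('a \<Rightarrow> 'a) \<Rightarrow> ('a \<Rightarrow> 'a) \<Rightarrow> ('a \<Rightarrow> 'g) \<Rightarrow> 'a rel" where
  "contr_rel f X r i l =
    (let B = (\<Union>e\<in>{e \<in> hedges X r. f (l e) = 0}. {(e, r e), (e, i e), (e, r (i e))})
     in (B \<union> B\<inverse> \<union> Id_on X)\<^sup>*)"

definition contr_phi :: "('g \<Rightarrow> 'h::zero) \<Rightarrow> 'a set \<Rightarrow> ('a \<Rightarrow> 'a) \<Rightarrow> ('a \<Rightarrow> 'a) \<Rightarrow> ('a \<Rightarrow> 'g) \<Rightarrow> 'a \<Rightarrow> 'a set" where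
  "contr_phi f X r i l x = contr_rel f X r i l `` {x}"

definition contr_X :: "('g \<Rightarrow> 'h::zero) \<Rightarrow> 'a set \<Rightarrow> ('a \<Rightarrow> 'a) \<Rightarrow> ('a \<Rightarrow> 'a) \<Rightarrow> ('a \<Rightarrow> 'g) \<Rightarrow> 'a set set" where
  "contr_X f X r i l = X // contr_rel f X r i l"

definition contr_r :: "('g \<Rightarrow> 'h::zero) \<Rightarrow> 'a set \<Rightarrow> ('a \<Rightarrow> 'a) \<Rightarrow> ('a \<Rightarrow> 'a) \<Rightarrow> ('a \<Rightarrow> 'g) \<Rightarrow> 'a set \<Rightarrow> 'a set" where
  "contr_r f X r i l c = contr_phi f X r i l (r (SOME x. x \<in> c))"

definition contr_i :: "('g \<Rightarrow> 'h::zero) \<Rightarrow> 'a set \<Rightarrow> ('a \<Rightarrow> 'a) \<Rightarrow> ('a \<Rightarrow> 'a) \<Rightarrow> ('a \<Rightarrow> 'g) \<Rightarrow> 'a set \<Rightarrow> 'a set" where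
  "contr_i f X r i l c = contr_phi f X r i l (i (SOME x. x \<in> c))"

definition contr_l :: "('g \<Rightarrow> 'h::zero) \<Rightarrow> 'a set \<Rightarrow> ('a \<Rightarrow> 'a) \<Rightarrow> ('a \<Rightarrow> 'a) \<Rightarrow> ('a \<Rightarrow> 'g) \<Rightarrow> 'a set \<Rightarrow> 'h" where
  "contr_l f X r i l c = f (l (SOME x. x \<in> c))"

definition push :: "('g \<Rightarrow> 'h::zero) \<Rightarrow> 'a set \<Rightarrow> ('a \<Rightarrow> 'a) \<Rightarrow> ('a \<Rightarrow> 'a) \<Rightarrow> ('a \<Rightarrow> 'g) \<Rightarrow> ('a \<Rightarrow> int) \<Rightarrow> 'a set \<Rightarrow> int" where
  "push f X r i l D c = (\<Sum>v\<in>{v \<in> verts X r. contr_phi f X r i l v = c}. D v)"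

end

theory Submission
  imports Defs
begin

lemma zmult_0[simp]: "zmult 0 m = 0" by (simp add: zmult_def)

lemma zmult_succ: "zmult (k+1) m = zmult k m + m"
proof (cases "k \<ge> 0")
  case True
  then have "nat (k+1) = Suc (nat k)" by simp
  then show ?thesis using True by (simp add: zmult_def add.commute)
next
  case False
  then have n: "nat (-k) = Suc (nat (-k-1))" by simp
  show ?thesis
  proof (cases "k = -1")
    case True then show ?thesis by (simp add: zmult_def)
  next
    case False2: False
    then have "\<not> 0 \<le> k+1" "nat (-(k+1)) = nat (-k-1)" using False by auto
    then show ?thesis using False n by (simp add: zmult_def)
  qed
qed

lemma zmult_pred: "zmult (k-1) m = zmult k m - m"
  using zmult_succ[of "k-1" m] by (simp add: algebra_simps)

lemma zmult_add: "zmult (a+b) m = zmult a m + zmult b m"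
proof (induction b rule: int_induct[where k=0])
  case base then show ?case by simp
next
  case (step1 i) then show ?case using zmult_succ[of "a+i" m] zmult_succ[of i m]
    by (simp add: algebra_simps)
next
  case (step2 i)
  have "zmult (a+(i-1)) m = zmult (a+i) m - m" using zmult_pred[of "a+i" m] by (simp add: algebra_simps)
  also have "\<dots> = zmult a m + (zmult i m - m)" using step2 by (simp add: algebra_simps)
  also have "\<dots> = zmult a m + zmult (i-1) m" using zmult_pred[of i m] by simp
  finally show ?case .
qed

lemma zmult_minus: "zmult (-k) m = - zmult k m"
  using zmult_add[of k "-k" m] by (simp add: eq_neg_iff_add_eq_0 add.commute)

lemma zmult_diff: "zmult (a-b) m = zmult a m - zmult b m"
  using zmult_add[of a "-b" m] zmult_minus[of b m] by simp

lemma zmult_hom: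
  assumes G0: "0 \<in> G" and Gadd: "\<And>x y. x \<in> G \<Longrightarrow> y \<in> G \<Longrightarrow> x + y \<in> G"
    and Gneg: "\<And>x. x \<in> G \<Longrightarrow> - x \<in> G"
    and hadd: "\<And>x y. x \<in> G \<Longrightarrow> y \<in> G \<Longrightarrow> h (x + y) = h x + h y"
    and m: "m \<in> G"
  shows "zmult k m \<in> G \<and> h (zmult k m) = zmult k (h m)"
proof -
  have h0: "h 0 = 0" using hadd[OF G0 G0] by simp
  have hneg: "h (-x) = - h x" if "x \<in> G" for x
    using hadd[OF that Gneg[OF that]] h0 by (simp add: eq_neg_iff_add_eq_0 add.commute)
  show ?thesis
  proof (induction k rule: int_induct[where k=0])
    case base then show ?case using G0 h0 by simp
  next
    case (step1 i) then show ?case using zmult_succ[of i m] zmult_succ[of i "h m"] Gadd m hadd by simp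
  next
    case (step2 i)
    have "zmult (i-1) m = zmult i m + - m" using zmult_pred[of i m] by simp
    moreover have "zmult (i-1) (h m) = zmult i (h m) + - h m" using zmult_pred[of i "h m"] by simp
    ultimately show ?case using step2 Gadd[of "zmult i m" "-m"] Gneg m hadd[of "zmult i m" "-m"] hneg[of m] by simp
  qed
qed

lemma sum_const_in:
  fixes n :: nat
  assumes "sharp_integral_monoid M" "m \<in> M"
  shows "(\<Sum>_\<in>{..<n}. m) \<in> M"
proof (induct n)
  case 0 then show ?case using assms by (simp add: sharp_integral_monoid_def)
next
  case (Suc n) then show ?case using assms by (simp add: sharp_integral_monoid_def)
qed

lemma zmult_zero_iff:
  assumes M: "sharp_integral_monoid M" and m: "m \<in> M" "m \<noteq> 0" and z: "zmult k m = 0"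
  shows "k = 0"
proof (rule ccontr)
  assume "k \<noteq> 0"
  then obtain n where n: "nat \<bar>k\<bar> = Suc n" by (metis gr0_implies_Suc nat_0_iff zero_less_abs_iff zero_less_nat_eq)
  have S: "(\<Sum>_\<in>{..<n}. m) \<in> M" using sum_const_in[OF M m(1)] .
  have "(\<Sum>_\<in>{..<Suc n}. m) = 0"
  proof (cases "k \<ge> 0")
    case True then show ?thesis using z n by (simp add: zmult_def)
  next
    case False then have "nat (-k) = Suc n" using n by simp
    then have "- (\<Sum>_\<in>{..<Suc n}. m) = 0" using z False by (simp only: zmult_def if_False)
    then show ?thesis by (metis neg_equal_0_iff_equal)
  qed
  then have "m + (\<Sum>_\<in>{..<n}. m) = 0" by (simp add: add.commute)
  then have "m = 0" using M S m(1) unfolding sharp_integral_monoid_def by blast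
  then show False using m by simp
qed

lemma zmult_inj:
  assumes M: "sharp_integral_monoid M" and m: "m \<in> M" "m \<noteq> 0" and z: "zmult a m = zmult b m"
  shows "a = b"
  using zmult_zero_iff[OF M m, of "a-b"] z zmult_diff[of a b m] by simp

lemma zdiv_zmult:
  assumes M: "sharp_integral_monoid M" and m: "m \<in> M" "m \<noteq> 0"
  shows "zdiv (zmult k m) m = k"
  unfolding zdiv_def by (rule the_equality) (auto dest: zmult_inj[OF M m])


lemma grp_eq: assumes "(a::'a::ab_group_add) + d = c + b" shows "c - d = a - b"
proof -
  have "c - d = (c + b) - (b + d)" by (simp add: algebra_simps)
  also have "\<dots> = (a + d) - (b + d)" using assms by simp
  also have "\<dots> = a - b" by simp
  finally show ?thesis .
qed

definition fe :: "'g::ab_group_add set \<Rightarrow> ('g \<Rightarrow> 'h::ab_group_add) \<Rightarrow> 'g \<Rightarrow> 'h" where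
  "fe M f x = (THE y. \<exists>a\<in>M. \<exists>b\<in>M. x = a - b \<and> y = f a - f b)"

locale embed =
  fixes M :: "'g::ab_group_add set" and N :: "'h::ab_group_add set" and f :: "'g \<Rightarrow> 'h"
  assumes M: "sharp_integral_monoid M" and N: "sharp_integral_monoid N"
    and hom: "monoid_hom M N f" and inj: "inj_on f M"
begin

lemma fadd: "a \<in> M \<Longrightarrow> b \<in> M \<Longrightarrow> f (a + b) = f a + f b"
  using hom by (simp add: monoid_hom_def)
lemma f0: "f 0 = 0" using hom by (simp add: monoid_hom_def)
lemma fN: "a \<in> M \<Longrightarrow> f a \<in> N" using hom by (auto simp add: monoid_hom_def)
lemma M0: "0 \<in> M" and Madd: "a \<in> M \<Longrightarrow> b \<in> M \<Longrightarrow> a + b \<in> M"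
  using M by (auto simp: sharp_integral_monoid_def)

lemma fe_eq: assumes "a \<in> M" "b \<in> M" shows "fe M f (a - b) = f a - f b"
  unfolding fe_def
proof (rule the_equality)
  show "\<exists>c\<in>M. \<exists>d\<in>M. a - b = c - d \<and> f a - f b = f c - f d" using assms by blast
next
  fix y assume "\<exists>c\<in>M. \<exists>d\<in>M. a - b = c - d \<and> y = f c - f d"
  then obtain c d where cd: "c \<in> M" "d \<in> M" "a - b = c - d" "y = f c - f d" by blast
  then have "a + d = c + b" by (simp add: algebra_simps)
  then have "f a + f d = f c + f b" using fadd assms cd by metis
  then show "y = f a - f b" using cd grp_eq by metis
qed

lemma gp0: "0 \<in> gp M" unfolding gp_def using M0 by force
lemma gpadd: assumes "x \<in> gp M" "y \<in> gp M" shows "x + y \<in> gp M"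
proof -
  obtain a b c d where "a \<in> M" "b \<in> M" "c \<in> M" "d \<in> M" "x = a - b" "y = c - d"
    using assms unfolding gp_def by blast
  moreover then have "x + y = (a + c) - (b + d)" by (simp add: algebra_simps)
  ultimately show ?thesis unfolding gp_def using Madd by blast
qed
lemma gpneg: "x \<in> gp M \<Longrightarrow> - x \<in> gp M"
  unfolding gp_def by force
lemma gpdiff: "x \<in> gp M \<Longrightarrow> y \<in> gp M \<Longrightarrow> x - y \<in> gp M"
  using gpadd gpneg by (metis diff_conv_add_uminus)
lemma gpM: "m \<in> M \<Longrightarrow> m \<in> gp M"
  unfolding gp_def using M0 by force

lemma fe_add: assumes "x \<in> gp M" "y \<in> gp M" shows "fe M f (x + y) = fe M f x + fe M f y"
proof -
  obtain a b c d where "a \<in> M" "b \<in> M" "c \<in> M" "d \<in> M" "x = a - b" "y = c - d"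
    using assms unfolding gp_def by blast
  note abcd = this
  have "x + y = (a + c) - (b + d)" using abcd by (simp add: algebra_simps)
  then have "fe M f (x + y) = f (a + c) - f (b + d)" using fe_eq[of "a+c" "b+d"] Madd abcd by metis
  also have "\<dots> = (f a - f b) + (f c - f d)" using fadd abcd by (simp add: algebra_simps)
  also have "\<dots> = fe M f x + fe M f y" using fe_eq abcd by simp
  finally show ?thesis .
qed

lemma fe_diff: assumes "x \<in> gp M" "y \<in> gp M" shows "fe M f (x - y) = fe M f x - fe M f y"
proof -
  have "fe M f (x - y) + fe M f y = fe M f x" using fe_add[OF gpdiff[OF assms] assms(2)] by simp
  then show ?thesis by (simp add: algebra_simps)
qed

lemma fe_M: "m \<in> M \<Longrightarrow> fe M f m = f m"
  using fe_eq[of m 0] M0 f0 by simp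

lemma fe_gp: assumes "x \<in> gp M" shows "fe M f x \<in> gp N"
proof -
  obtain a b where "a \<in> M" "b \<in> M" "x = a - b" using assms unfolding gp_def by blast
  then show ?thesis using fe_eq fN unfolding gp_def by blast
qed

lemma fe_inj: assumes "x \<in> gp M" "y \<in> gp M" "fe M f x = fe M f y" shows "x = y"
proof -
  obtain a b c d where abcd: "a \<in> M" "b \<in> M" "c \<in> M" "d \<in> M" "x = a - b" "y = c - d"
    using assms unfolding gp_def by blast
  then have "f a - f b = f c - f d" using fe_eq assms by simp
  then have "f (a + d) = f (c + b)" using fadd abcd by (simp add: algebra_simps)
  then have "a + d = c + b" using inj Madd abcd by (meson inj_on_def)
  then have "c - d = a - b" by (rule grp_eq)
  then show ?thesis using abcd by simp
qed

lemma fe_zmult: "m \<in> M \<Longrightarrow> zmult k m \<in> gp M \<and> fe M f (zmult k m) = zmult k (f m)"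
  using zmult_hom[of "gp M" "fe M f" m k] gp0 gpadd gpneg fe_add gpM fe_M by metis



lemma graph_facts:
  assumes "is_graph X r i"
  shows "r ` X \<subseteq> X" "i ` X \<subseteq> X" "\<forall>x\<in>X. r (r x) = r x" "\<forall>x\<in>X. i (i x) = x"
    "\<forall>x\<in>X. i x = x \<longleftrightarrow> r x = x"
  using assms unfolding is_graph_def by blast+

lemma edge_facts:
  assumes "metrised M X r i l" "e \<in> hedges X r"
  shows "e \<in> X \<and> i e \<in> X \<and> l e \<in> M \<and> l e \<noteq> 0 \<and> r e \<in> verts X r \<and> r (i e) \<in> verts X r
     \<and> f (l e) \<in> N \<and> f (l e) \<noteq> 0"
proof -
  have e: "e \<in> X" "r e \<noteq> e" using assms(2) by (auto simp: hedges_def verts_def)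
  have g: "is_graph X r i" using assms(1) by (simp add: metrised_def)
  note gf = graph_facts[OF g]
  have ie: "i e \<in> X" using gf(2) e by blast
  have le: "l e \<in> M" "l e \<noteq> 0" using assms(1) e unfolding metrised_def verts_def by auto
  have "r e \<in> verts X r" "r (i e) \<in> verts X r" using gf(1,3) e ie unfolding verts_def by auto
  moreover have "f (l e) \<in> N" using fN le by simp
  moreover have "f (l e) \<noteq> 0" using le inj M0 f0 by (metis inj_onD)
  ultimately show ?thesis using e ie le by simp
qed

lemma lap_eq:
  assumes met: "metrised M X r i l"
    and k: "\<forall>e\<in>hedges X r. \<exists>k. g (r e) - g (r (i e)) = zmult k (l e) \<and> g' (r e) - g' (r (i e)) = zmult k (f (l e))"
  shows "laplacian X r i (f \<circ> l) g' = laplacian X r i l g"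
  unfolding laplacian_def
proof (rule ext)
  fix v
  have inner: "zdiv (g' v - g' (r (i e))) ((f \<circ> l) e) = zdiv (g v - g (r (i e))) (l e)"
    if "e \<in> {e \<in> hedges X r. r e = v}" for e
  proof -
    have eH: "e \<in> hedges X r" and v: "v = r e" using that by auto
    have ef: "l e \<in> M" "l e \<noteq> 0" "f (l e) \<in> N" "f (l e) \<noteq> 0" using edge_facts[OF met eH] by auto
    obtain kk where kk: "g (r e) - g (r (i e)) = zmult kk (l e)" "g' (r e) - g' (r (i e)) = zmult kk (f (l e))"
      using k eH by blast
    have "zdiv (g' v - g' (r (i e))) ((f \<circ> l) e) = kk"
      unfolding v kk(2) comp_def by (rule zdiv_zmult[OF N ef(3,4)])
    moreover have "zdiv (g v - g (r (i e))) (l e) = kk"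
      unfolding v kk(1) by (rule zdiv_zmult[OF M ef(1,2)])
    ultimately show ?thesis by simp
  qed
  have "(\<Sum>e\<in>{e \<in> hedges X r. r e = v}. zdiv (g' v - g' (r (i e))) ((f \<circ> l) e)) =
        (\<Sum>e\<in>{e \<in> hedges X r. r e = v}. zdiv (g v - g (r (i e))) (l e))"
    by (rule sum.cong[OF refl inner])
  then show "(if v \<in> verts X r then \<Sum>e\<in>{e \<in> hedges X r. r e = v}. zdiv (g' v - g' (r (i e))) ((f \<circ> l) e) else 0) =
        (if v \<in> verts X r then \<Sum>e\<in>{e \<in> hedges X r. r e = v}. zdiv (g v - g (r (i e))) (l e) else 0)"
    by simp
qed


lemma rescale:
  assumes met: "metrised M X r i l"
  shows "laplacian X r i (f \<circ> l) ` PL N X r i (f \<circ> l) = laplacian X r i l ` PL M X r i l"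
proof
  show "laplacian X r i l ` PL M X r i l \<subseteq> laplacian X r i (f \<circ> l) ` PL N X r i (f \<circ> l)"
  proof
    fix L assume "L \<in> laplacian X r i l ` PL M X r i l"
    then obtain g where g: "g \<in> PL M X r i l" "L = laplacian X r i l g" by blast
    define g' where "g' = (\<lambda>x. if x \<in> verts X r then fe M f (g x) else 0)"
    have ek: "\<exists>k. g (r e) - g (r (i e)) = zmult k (l e) \<and> g' (r e) - g' (r (i e)) = zmult k (f (l e))"
      if eH: "e \<in> hedges X r" for e
    proof -
      have ef: "l e \<in> M" "r e \<in> verts X r" "r (i e) \<in> verts X r" using edge_facts[OF met eH] by auto
      obtain k where k: "g (r e) - g (r (i e)) = zmult k (l e)" using g(1) eH unfolding PL_def cyc_def by blast
      have gv: "g (r e) \<in> gp M" "g (r (i e)) \<in> gp M" using g(1) ef unfolding PL_def by blast+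
      have "g' (r e) - g' (r (i e)) = fe M f (g (r e)) - fe M f (g (r (i e)))" using ef by (simp add: g'_def)
      also have "\<dots> = fe M f (zmult k (l e))" using fe_diff[OF gv] k by simp
      also have "\<dots> = zmult k (f (l e))" using fe_zmult ef by blast
      finally show ?thesis using k by blast
    qed
    have "g' \<in> PL N X r i (f \<circ> l)"
      unfolding PL_def cyc_def
    proof (intro CollectI conjI ballI allI impI)
      fix v assume "v \<in> verts X r"
      then show "g' v \<in> gp N" using g(1) fe_gp unfolding PL_def g'_def by auto
    next
      fix x assume "x \<notin> verts X r" then show "g' x = 0" by (simp add: g'_def)
    next
      fix e assume "e \<in> hedges X r"
      then show "\<exists>k. g' (r e) - g' (r (i e)) = zmult k ((f \<circ> l) e) \<and> True" using ek by auto
    qed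
    moreover have "L = laplacian X r i (f \<circ> l) g'" using lap_eq[OF met, of g g'] ek g(2) by simp
    ultimately show "L \<in> laplacian X r i (f \<circ> l) ` PL N X r i (f \<circ> l)" by blast
  qed
next
  show "laplacian X r i (f \<circ> l) ` PL N X r i (f \<circ> l) \<subseteq> laplacian X r i l ` PL M X r i l"
  proof
    fix L assume "L \<in> laplacian X r i (f \<circ> l) ` PL N X r i (f \<circ> l)"
    then obtain g' where g': "g' \<in> PL N X r i (f \<circ> l)" "L = laplacian X r i (f \<circ> l) g'" by blast
    have k': "\<exists>k. g' (r e) - g' (r (i e)) = zmult k (f (l e))" if "e \<in> hedges X r" for e
      using g'(1) that unfolding PL_def cyc_def comp_def by blast
    show "L \<in> laplacian X r i l ` PL M X r i l"
    proof (cases "verts X r = {}")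
      case True
      then have H: "hedges X r = {}" using edge_facts[OF met] by blast
      have "(\<lambda>_. 0) \<in> PL M X r i l" unfolding PL_def using True H by auto
      moreover have "laplacian X r i (f \<circ> l) g' = laplacian X r i l (\<lambda>_. 0)"
        unfolding laplacian_def using True by simp
      ultimately show ?thesis using g'(2) by blast
    next
      case False
      then obtain v0 where v0: "v0 \<in> verts X r" by blast
      have conn: "(v0, v) \<in> {(r e, r (i e)) | e. e \<in> hedges X r}\<^sup>*" if "v \<in> verts X r" for v
        using met v0 that unfolding metrised_def is_graph_def by blast
      have reach: "\<exists>a. a \<in> gp M \<and> fe M f a = g' v - g' v0" if "v \<in> verts X r" for v
      proof -
        have "(v0, v) \<in> {(r e, r (i e)) | e. e \<in> hedges X r}\<^sup>*" by (rule conn[OF that])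
        then show ?thesis
        proof (induction rule: rtrancl_induct)
          case base then show ?case using gp0 fe_M[OF M0] f0 by auto
        next
          case (step w u)
          then obtain e where e: "e \<in> hedges X r" "w = r e" "u = r (i e)" by blast
          obtain a where a: "a \<in> gp M" "fe M f a = g' w - g' v0" using step by blast
          obtain k where k: "g' (r e) - g' (r (i e)) = zmult k (f (l e))" using k' e(1) by blast
          have ef: "l e \<in> M" using edge_facts[OF met e(1)] by blast
          have z: "zmult k (l e) \<in> gp M" "fe M f (zmult k (l e)) = zmult k (f (l e))"
            using fe_zmult[OF ef] by auto
          have "fe M f (a - zmult k (l e)) = (g' w - g' v0) - (g' w - g' u)"
            using fe_diff[OF a(1) z(1)] a(2) z(2) k e by simp
          also have "\<dots> = g' u - g' v0" by (simp add: algebra_simps)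
          finally show ?case using gpdiff[OF a(1) z(1)] by blast
        qed
      qed
      define g where "g = (\<lambda>v. if v \<in> verts X r then (SOME a. a \<in> gp M \<and> fe M f a = g' v - g' v0) else 0)"
      have gv: "g v \<in> gp M \<and> fe M f (g v) = g' v - g' v0" if "v \<in> verts X r" for v
        using someI_ex[OF reach[OF that]] that unfolding g_def by simp
      have ek: "\<exists>k. g (r e) - g (r (i e)) = zmult k (l e) \<and> g' (r e) - g' (r (i e)) = zmult k (f (l e))"
        if eH: "e \<in> hedges X r" for e
      proof -
        have ef: "l e \<in> M" "r e \<in> verts X r" "r (i e) \<in> verts X r" using edge_facts[OF met eH] by auto
        obtain k where k: "g' (r e) - g' (r (i e)) = zmult k (f (l e))" using k' eH by blast
        have z: "zmult k (l e) \<in> gp M" "fe M f (zmult k (l e)) = zmult k (f (l e))"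
          using fe_zmult[OF ef(1)] by auto
        have a: "g (r e) \<in> gp M" "g (r (i e)) \<in> gp M" using gv ef by blast+
        have "fe M f (g (r e) - g (r (i e))) = (g' (r e) - g' v0) - (g' (r (i e)) - g' v0)"
          using fe_diff[OF a] gv[OF ef(2)] gv[OF ef(3)] by simp
        also have "\<dots> = g' (r e) - g' (r (i e))" by (simp add: algebra_simps)
        also have "\<dots> = fe M f (zmult k (l e))" using k z(2) by simp
        finally have "g (r e) - g (r (i e)) = zmult k (l e)" by (rule fe_inj[OF gpdiff[OF a] z(1)])
        then show ?thesis using k by blast
      qed
      have "g \<in> PL M X r i l"
        unfolding PL_def cyc_def
      proof (intro CollectI conjI ballI allI impI)
        fix v assume "v \<in> verts X r" then show "g v \<in> gp M" using gv by blast
      next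
        fix x assume "x \<notin> verts X r" then show "g x = 0" by (simp add: g_def)
      next
        fix e assume "e \<in> hedges X r"
        then show "\<exists>k. g (r e) - g (r (i e)) = zmult k (l e) \<and> True" using ek by blast
      qed
      moreover have "L = laplacian X r i l g" using lap_eq[OF met, of g g'] ek g'(2) by simp
      ultimately show ?thesis by blast
    qed
  qed
qed

lemma rank_rescale:
  assumes met: "metrised M X r i l"
  shows "rank N X r i (f \<circ> l) D = rank M X r i l D"
  unfolding rank_def lin_sys_def lin_equiv_def rescale[OF met] ..

end

definition liftd :: "'a set \<Rightarrow> ('a \<Rightarrow> 'b::zero) \<Rightarrow> 'a set \<Rightarrow> 'b" where
  "liftd V E c = (if c \<in> (\<lambda>v. {v}) ` V then E (the_elem c) else 0)"

definition pulld :: "('a set \<Rightarrow> 'b) \<Rightarrow> 'a \<Rightarrow> 'b" where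
  "pulld E x = E {x}"

lemma liftd_single[simp]: "liftd V E {x} = (if x \<in> V then E x else 0)"
  by (auto simp: liftd_def)
lemma liftd_out: "c \<notin> (\<lambda>v. {v}) ` V \<Longrightarrow> liftd V E c = 0"
  by (simp add: liftd_def)
lemma pull_lift: "\<forall>x. x \<notin> V \<longrightarrow> E x = 0 \<Longrightarrow> pulld (liftd V E) = E"
  by (auto simp: pulld_def fun_eq_iff)
lemma lift_pull: "\<forall>c. c \<notin> (\<lambda>v. {v}) ` V \<longrightarrow> E c = 0 \<Longrightarrow> liftd V (pulld E) = E"
  by (auto simp: pulld_def liftd_def fun_eq_iff)
lemma lift_diff: "liftd V (E - F) = liftd V E - liftd V (F :: _ \<Rightarrow> 'b::ab_group_add)"
  by (auto simp: liftd_def fun_eq_iff)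
lemma pull_diff: "pulld (E - F) = pulld E - pulld (F :: _ \<Rightarrow> 'b::ab_group_add)"
  by (auto simp: pulld_def fun_eq_iff)

locale iso =
  fixes X :: "'a set" and r i :: "'a \<Rightarrow> 'a" and L :: "'a \<Rightarrow> 'h::ab_group_add"
    and r' i' :: "'a set \<Rightarrow> 'a set" and l' :: "'a set \<Rightarrow> 'h"
  assumes G: "is_graph X r i"
    and r': "\<forall>x\<in>X. r' {x} = {r x}" and i': "\<forall>x\<in>X. i' {x} = {i x}" and l': "\<forall>x\<in>X. l' {x} = L x"
begin

abbreviation "X' \<equiv> (\<lambda>x. {x}) ` X"
abbreviation "V \<equiv> verts X r"

lemma gf: "r ` X \<subseteq> X" "i ` X \<subseteq> X" "\<forall>x\<in>X. r (r x) = r x"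
  using G unfolding is_graph_def by blast+

lemma V': "verts X' r' = (\<lambda>x. {x}) ` V"
  using r' unfolding verts_def by auto

lemma H': "hedges X' r' = (\<lambda>x. {x}) ` hedges X r"
  unfolding hedges_def V' by (auto simp: verts_def)

lemma divs': "divisors X' r' = {E. \<forall>c. c \<notin> (\<lambda>v. {v}) ` V \<longrightarrow> E c = 0}"
  unfolding divisors_def V' ..

lemma divs: "divisors X r = {E. \<forall>x. x \<notin> V \<longrightarrow> E x = 0}"
  unfolding divisors_def ..

lemma hedge_facts: "e \<in> hedges X r \<Longrightarrow> e \<in> X \<and> i e \<in> X \<and> r e \<in> V \<and> r (i e) \<in> V"
  using gf unfolding hedges_def verts_def by auto

lemma lap_comm: "laplacian X' r' i' l' g' = liftd V (laplacian X r i L (pulld g'))"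
proof (rule ext)
  fix c
  show "laplacian X' r' i' l' g' c = liftd V (laplacian X r i L (pulld g')) c"
  proof (cases "c \<in> (\<lambda>x. {x}) ` V")
    case False
    then show ?thesis unfolding laplacian_def V' by (simp add: liftd_out)
  next
    case True
    then obtain v where v: "v \<in> V" "c = {v}" by blast
    have S: "{e' \<in> hedges X' r'. r' e' = {v}} = (\<lambda>x. {x}) ` {e \<in> hedges X r. r e = v}"
      unfolding H' using hedge_facts r' by force
    have "laplacian X' r' i' l' g' c = (\<Sum>e'\<in>{e' \<in> hedges X' r'. r' e' = {v}}. zdiv (g' {v} - g' (r' (i' e'))) (l' e'))"
      unfolding laplacian_def V' using v by simp
    also have "\<dots> = (\<Sum>e\<in>{e \<in> hedges X r. r e = v}. zdiv (g' {v} - g' (r' (i' {e}))) (l' {e}))"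
      unfolding S by (subst sum.reindex) (auto simp: inj_on_def)
    also have "\<dots> = (\<Sum>e\<in>{e \<in> hedges X r. r e = v}. zdiv (pulld g' v - pulld g' (r (i e))) (L e))"
    proof (rule sum.cong[OF refl])
      fix e assume "e \<in> {e \<in> hedges X r. r e = v}"
      then have "e \<in> X" "i e \<in> X" using hedge_facts by auto
      then show "zdiv (g' {v} - g' (r' (i' {e}))) (l' {e}) = zdiv (pulld g' v - pulld g' (r (i e))) (L e)"
        using r' i' l' by (simp add: pulld_def)
    qed
    also have "\<dots> = liftd V (laplacian X r i L (pulld g')) c"
      using v unfolding laplacian_def by simp
    finally show ?thesis .
  qed
qed


lemma PL_D: assumes "g \<in> PL N Y rr ii ll"
  shows "\<forall>v\<in>verts Y rr. g v \<in> gp N" "\<forall>x. x \<notin> verts Y rr \<longrightarrow> g x = 0"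
    "\<forall>e\<in>hedges Y rr. g (rr e) - g (rr (ii e)) \<in> cyc (ll e)"
  using assms unfolding PL_def by blast+

lemma pull_PL: assumes "g' \<in> PL N X' r' i' l'" shows "pulld g' \<in> PL N X r i L"
  unfolding PL_def
proof (intro CollectI conjI ballI allI impI)
  fix v assume "v \<in> V"
  then have "{v} \<in> verts X' r'" unfolding V' by blast
  then show "pulld g' v \<in> gp N" using PL_D(1)[OF assms] unfolding pulld_def by blast
next
  fix x assume "x \<notin> V"
  then have "{x} \<notin> verts X' r'" unfolding V' by blast
  then show "pulld g' x = 0" using PL_D(2)[OF assms] unfolding pulld_def by blast
next
  fix e assume e: "e \<in> hedges X r"
  then have "{e} \<in> hedges X' r'" unfolding H' by blast
  then have "g' (r' {e}) - g' (r' (i' {e})) \<in> cyc (l' {e})" using PL_D(3)[OF assms] by blast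
  moreover have "r' {e} = {r e}" "r' (i' {e}) = {r (i e)}" "l' {e} = L e"
    using hedge_facts[OF e] r' i' l' by auto
  ultimately show "pulld g' (r e) - pulld g' (r (i e)) \<in> cyc (L e)"
    unfolding pulld_def by simp
qed

lemma lift_PL: assumes g: "g \<in> PL N X r i L" shows "liftd V g \<in> PL N X' r' i' l'"
  unfolding PL_def
proof (intro CollectI conjI ballI allI impI)
  fix c assume "c \<in> verts X' r'"
  then obtain v where "v \<in> V" "c = {v}" unfolding V' by blast
  then show "liftd V g c \<in> gp N" using PL_D(1)[OF g] by simp
next
  fix c assume "c \<notin> verts X' r'" then show "liftd V g c = 0"
    unfolding V' by (rule liftd_out)
next
  fix e' assume "e' \<in> hedges X' r'"
  then obtain e where e: "e \<in> hedges X r" "e' = {e}" unfolding H' by blast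
  have "g (r e) - g (r (i e)) \<in> cyc (L e)" using PL_D(3)[OF g] e by blast
  moreover have "r' {e} = {r e}" "r' (i' {e}) = {r (i e)}" "l' {e} = L e" "r e \<in> V" "r (i e) \<in> V"
    using hedge_facts[OF e(1)] r' i' l' by auto
  ultimately show "liftd V g (r' e') - liftd V g (r' (i' e')) \<in> cyc (l' e')"
    using e(2) by simp
qed

lemma PL_zero: "g \<in> PL N X r i L \<Longrightarrow> \<forall>x. x \<notin> V \<longrightarrow> g x = 0"
  unfolding PL_def by blast

lemma lap_zero: "\<forall>x. x \<notin> V \<longrightarrow> laplacian X r i L g x = 0"
  unfolding laplacian_def by simp

lemma lin_sys_iff:
  assumes D: "D \<in> divisors X r" and F': "F' \<in> divisors X' r'"
  shows "lin_sys N X' r' i' l' (liftd V D - F') \<noteq> {} \<longleftrightarrow> lin_sys N X r i L (D - pulld F') \<noteq> {}"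
proof
  assume "lin_sys N X' r' i' l' (liftd V D - F') \<noteq> {}"
  then obtain E' g' where E': "E' \<in> divisors X' r'" "\<forall>v. 0 \<le> E' v" "g' \<in> PL N X' r' i' l'"
    "E' - (liftd V D - F') = laplacian X' r' i' l' g'"
    unfolding lin_sys_def lin_equiv_def by blast
  have D0: "\<forall>x. x \<notin> V \<longrightarrow> D x = 0" using D divs by blast
  have "pulld E' - (D - pulld F') = pulld (E' - (liftd V D - F'))"
    unfolding pull_diff pull_lift[OF D0] ..
  also have "\<dots> = laplacian X r i L (pulld g')"
    unfolding E'(4) lap_comm by (rule pull_lift[OF lap_zero])
  finally have "lin_equiv N X r i L (pulld E') (D - pulld F')"
    unfolding lin_equiv_def using pull_PL[OF E'(3)] by blast
  moreover have "pulld E' \<in> divisors X r" using E'(1) unfolding divs divs' pulld_def by auto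
  moreover have "\<forall>v. 0 \<le> pulld E' v" using E'(2) by (simp add: pulld_def)
  ultimately show "lin_sys N X r i L (D - pulld F') \<noteq> {}" unfolding lin_sys_def by blast
next
  assume "lin_sys N X r i L (D - pulld F') \<noteq> {}"
  then obtain E g where E: "E \<in> divisors X r" "\<forall>v. 0 \<le> E v" "g \<in> PL N X r i L"
    "E - (D - pulld F') = laplacian X r i L g"
    unfolding lin_sys_def lin_equiv_def by blast
  have F0: "\<forall>c. c \<notin> (\<lambda>v. {v}) ` V \<longrightarrow> F' c = 0" using F' divs' by blast
  have "liftd V E - (liftd V D - F') = liftd V (E - (D - pulld F'))"
    unfolding lift_diff lift_pull[OF F0] ..
  also have "\<dots> = liftd V (laplacian X r i L (pulld (liftd V g)))"
    unfolding E(4) pull_lift[OF PL_zero[OF E(3)]] ..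
  also have "\<dots> = laplacian X' r' i' l' (liftd V g)" unfolding lap_comm ..
  finally have "lin_equiv N X' r' i' l' (liftd V E) (liftd V D - F')"
    unfolding lin_equiv_def using lift_PL[OF E(3)] by blast
  moreover have "liftd V E \<in> divisors X' r'" unfolding divs' by (auto simp: liftd_out)
  moreover have "\<forall>v. 0 \<le> liftd V E v" using E(2) by (simp add: liftd_def)
  ultimately show "lin_sys N X' r' i' l' (liftd V D - F') \<noteq> {}" unfolding lin_sys_def by blast
qed

lemma eff_iff:
  assumes F': "F' \<in> divisors X' r'"
  shows "F' \<in> eff_divs X' r' k \<longleftrightarrow> pulld F' \<in> eff_divs X r k"
proof -
  have F0: "\<forall>c. c \<notin> (\<lambda>v. {v}) ` V \<longrightarrow> F' c = 0" using F' divs' by blast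
  have deg: "deg X' r' F' = deg X r (pulld F')"
    unfolding deg_def V' by (subst sum.reindex) (auto simp: inj_on_def pulld_def)
  have pd: "pulld F' \<in> divisors X r" using F0 unfolding divs pulld_def by auto
  have nn: "(\<forall>v. 0 \<le> F' v) \<longleftrightarrow> (\<forall>v. 0 \<le> pulld F' v)"
  proof
    assume "\<forall>v. 0 \<le> F' v" then show "\<forall>v. 0 \<le> pulld F' v" by (simp add: pulld_def)
  next
    assume a: "\<forall>v. 0 \<le> pulld F' v"
    show "\<forall>v. 0 \<le> F' v"
    proof
      fix c show "0 \<le> F' c"
      proof (cases "c \<in> (\<lambda>v. {v}) ` V")
        case True then show ?thesis using a by (auto simp: pulld_def)
      next
        case False then show ?thesis using F0 by simp
      qed
    qed
  qed
  show ?thesis unfolding eff_divs_def using F' pd nn deg by auto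
qed

lemma iso_rank:
  assumes D: "D \<in> divisors X r"
  shows "rank N X' r' i' l' (liftd V D) = rank N X r i L D"
proof -
  have "(\<forall>F'\<in>eff_divs X' r' k. lin_sys N X' r' i' l' (liftd V D - F') \<noteq> {})
      \<longleftrightarrow> (\<forall>F\<in>eff_divs X r k. lin_sys N X r i L (D - F) \<noteq> {})" for k
  proof
    assume A: "\<forall>F'\<in>eff_divs X' r' k. lin_sys N X' r' i' l' (liftd V D - F') \<noteq> {}"
    show "\<forall>F\<in>eff_divs X r k. lin_sys N X r i L (D - F) \<noteq> {}"
    proof
      fix F assume F: "F \<in> eff_divs X r k"
      have F0: "\<forall>x. x \<notin> V \<longrightarrow> F x = 0" using F unfolding eff_divs_def divs by blast
      have ld: "liftd V F \<in> divisors X' r'" unfolding divs' by (auto simp: liftd_out)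
      have "liftd V F \<in> eff_divs X' r' k" using eff_iff[OF ld] pull_lift[OF F0] F by simp
      then have "lin_sys N X' r' i' l' (liftd V D - liftd V F) \<noteq> {}" using A by blast
      then show "lin_sys N X r i L (D - F) \<noteq> {}" using lin_sys_iff[OF D ld] pull_lift[OF F0] by simp
    qed
  next
    assume A: "\<forall>F\<in>eff_divs X r k. lin_sys N X r i L (D - F) \<noteq> {}"
    show "\<forall>F'\<in>eff_divs X' r' k. lin_sys N X' r' i' l' (liftd V D - F') \<noteq> {}"
    proof
      fix F' assume F': "F' \<in> eff_divs X' r' k"
      then have ld: "F' \<in> divisors X' r'" unfolding eff_divs_def by blast
      then show "lin_sys N X' r' i' l' (liftd V D - F') \<noteq> {}"
        using lin_sys_iff[OF D ld] eff_iff[OF ld] F' A by blast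
    qed
  qed
  then have "(\<lambda>k. \<forall>F'\<in>eff_divs X' r' k. lin_sys N X' r' i' l' (liftd V D - F') \<noteq> {})
      = (\<lambda>k. \<forall>F\<in>eff_divs X r k. lin_sys N X r i L (D - F) \<noteq> {})" by (rule ext)
  then show ?thesis unfolding rank_def by (rule arg_cong)
qed

end

lemma rtrancl_Id_on: "(Id_on X)\<^sup>* = Id"
proof
  show "(Id_on X)\<^sup>* \<subseteq> Id"
  proof
    fix p assume "p \<in> (Id_on X)\<^sup>*"
    then obtain a b where p: "p = (a, b)" "(a, b) \<in> (Id_on X)\<^sup>*" by (cases p) auto
    from p(2) have "a = b" by (induction rule: rtrancl_induct) auto
    then show "p \<in> Id" using p by simp
  qed
qed auto

theorem mainTheorem10:
  fixes M :: "'g::ab_group_add set" and N :: "'h::ab_group_add set"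
    and X :: "'a set" and r i :: "'a \<Rightarrow> 'a" and l :: "'a \<Rightarrow> 'g"
    and f :: "'g \<Rightarrow> 'h" and D :: "'a \<Rightarrow> int"
  assumes "sharp_integral_monoid M" and "sharp_integral_monoid N"
    and "metrised M X r i l"
    and "monoid_hom M N f" and "inj_on f M"
    and "D \<in> divisors X r"
  shows "rank N (contr_X f X r i l) (contr_r f X r i l) (contr_i f X r i l) (contr_l f X r i l)
           (push f X r i l D)
         = rank M X r i l D"
proof -
  interpret embed M N f using assms(1,2,4,5) by unfold_locales
  have met: "metrised M X r i l" by fact
  have G: "is_graph X r i" using met unfolding metrised_def by blast
  have B: "{e \<in> hedges X r. f (l e) = 0} = {}" using edge_facts[OF met] by blast
  have cr: "contr_rel f X r i l = Id"
    unfolding contr_rel_def Let_def B by (simp add: rtrancl_Id_on)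
  have phi: "contr_phi f X r i l x = {x}" for x unfolding contr_phi_def cr by simp
  have cX: "contr_X f X r i l = (\<lambda>x. {x}) ` X"
    unfolding contr_X_def cr quotient_def by auto
  have cr': "\<forall>x\<in>X. contr_r f X r i l {x} = {r x}" unfolding contr_r_def phi by simp
  have ci': "\<forall>x\<in>X. contr_i f X r i l {x} = {i x}" unfolding contr_i_def phi by simp
  have cl': "\<forall>x\<in>X. contr_l f X r i l {x} = (f \<circ> l) x" unfolding contr_l_def by simp
  have push: "push f X r i l D = liftd (verts X r) D"
  proof (rule ext)
    fix c
    show "push f X r i l D c = liftd (verts X r) D c"
    proof (cases "c \<in> (\<lambda>v. {v}) ` verts X r")
      case True
      then obtain w where w: "w \<in> verts X r" "c = {w}" by blast
      then have "{v \<in> verts X r. contr_phi f X r i l v = c} = {w}" unfolding phi by auto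
      then show ?thesis unfolding push_def using w by simp
    next
      case False
      then have "{v \<in> verts X r. contr_phi f X r i l v = c} = {}" unfolding phi by auto
      then have "push f X r i l D c = 0" unfolding push_def by (metis sum.empty)
      then show ?thesis using False by (simp add: liftd_out)
    qed
  qed
  interpret iso X r i "f \<circ> l" "contr_r f X r i l" "contr_i f X r i l" "contr_l f X r i l"
    using G cr' ci' cl' by unfold_locales
  show ?thesis
    unfolding cX push iso_rank[OF assms(6)] rank_rescale[OF met] ..
qed

end
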